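(* Let $x_0\in W^2_\infty(0,1)$ be positive with $x_0(0)>0$, let $F(x)(s)=\int_0^s x(s-t)x(t)\,dt$, and let $y^\delta=F(x_0)+\delta\xi$ where $\delta\in(0,1]$ and $\|\xi\|_\infty\le\delta$. Let $\sigma>0$ and let $m\in\mathbb{N}$ with $m\ge 1/\delta$. Let $Q_m$ be the $L_2(0,1)$-orthogonal projection onto piecewise constant functions on the equidistant partition, i.e. $[Q_m y](s)=m\int_{\Delta_i}y(t)\,dt$ for $s\in\Delta_i=[(i-1)/m,i/m)$. If $[Q_m y^\delta](\sqrt\delta)\ge0$, then $$\left|\sqrt{\tfrac{1}{\sqrt\delta}[Q_my^\delta](\sqrt\delta)}-x_0(0)\right|\le\frac{1+4\|x_0\|_{C^1(0,1)}^2}{x_0(0)}\sqrt\delta,$$ and otherwise $$|x_0(0)|\le\frac{1+4\|x_0\|_{C^1(0,1)}^2}{x_0(0)}\sqrt\delta.$$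
   Context: All functions are real-valued. $\|x\|_{C^1(0,1)}:=\max\{\|x\|_\infty,\|x'\|_\infty\}$, where $\|\cdot\|_\infty$ is the essential supremum norm. The last partition interval is taken to contain the endpoint $1$ so that $Q_my$ is defined on $[0,1]$. *)

theory Defs
  imports "HOL-Analysis.Analysis"
begin

text \<open>W^2_inf(0,1): x is C^1 on [0,1] with derivative x' (one-sided at endpoints),
  and x' is Lipschitz on [0,1] (equivalently x' is in W^1_inf).\<close>
definition W2inf :: "(real \<Rightarrow> real) \<Rightarrow> (real \<Rightarrow> real) \<Rightarrow> bool" where
  "W2inf x x' \<longleftrightarrow>
     (\<forall>t\<in>{0..1}. (x has_real_derivative x' t) (at t within {0..1})) \<and>
     (\<exists>L. \<forall>s\<in>{0..1}. \<forall>t\<in>{0..1}. \<bar>x' s - x' t\<bar> \<le> L * \<bar>s - t\<bar>)"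

text \<open>C^1(0,1) norm max(||x||_inf, ||x'||_inf); for continuous x, x' the essential
  supremum equals the supremum over [0,1].\<close>
definition C1norm :: "(real \<Rightarrow> real) \<Rightarrow> (real \<Rightarrow> real) \<Rightarrow> real" where
  "C1norm x x' = max (SUP t\<in>{0..1}. \<bar>x t\<bar>) (SUP t\<in>{0..1}. \<bar>x' t\<bar>)"

definition Fconv :: "(real \<Rightarrow> real) \<Rightarrow> real \<Rightarrow> real" where
  "Fconv x s = integral {0..s} (\<lambda>t. x (s - t) * x t)"

text \<open>Index (0-based) of the partition interval [i/m,(i+1)/m) containing s;
  the last interval also contains 1.\<close>
definition cell :: "nat \<Rightarrow> real \<Rightarrow> nat" where
  "cell m s = min (nat \<lfloor>s * real m\<rfloor>) (m - 1)"

definition Qm :: "nat \<Rightarrow> (real \<Rightarrow> real) \<Rightarrow> real \<Rightarrow> real" where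
  "Qm m y s = real m * integral {real (cell m s) / real m .. real (Suc (cell m s)) / real m} y"

end

theory Submission imports Defs begin

lemma cell_props:
  assumes m: "m \<ge> 1" and s: "0 \<le> s" "s \<le> 1"
  shows "real (cell m s) / m \<le> s" "s \<le> real (Suc (cell m s)) / m" "real (Suc (cell m s)) \<le> real m"
proof -
  have mp: "real m > 0" using m by simp
  have f0: "0 \<le> \<lfloor>s * real m\<rfloor>" using s by simp
  have fl: "real (nat \<lfloor>s * real m\<rfloor>) = of_int \<lfloor>s * real m\<rfloor>" using f0 by simp
  show "real (Suc (cell m s)) \<le> real m" unfolding cell_def using m by linarith
  show "real (cell m s) / m \<le> s"
  proof -
    have "real (cell m s) \<le> real (nat \<lfloor>s * real m\<rfloor>)" unfolding cell_def by simp
    also have "\<dots> \<le> s * real m" using fl by linarith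
    finally show ?thesis using mp by (simp add: divide_le_eq)
  qed
  show "s \<le> real (Suc (cell m s)) / m"
  proof (cases "nat \<lfloor>s * real m\<rfloor> \<le> m - 1")
    case True
    then have "cell m s = nat \<lfloor>s * real m\<rfloor>" unfolding cell_def by simp
    then have "real (Suc (cell m s)) = of_int \<lfloor>s * real m\<rfloor> + 1" using fl by simp
    also have "\<dots> \<ge> s * real m" by linarith
    finally show ?thesis using mp by (simp add: le_divide_eq)
  next
    case False
    then have "cell m s = m - 1" unfolding cell_def by simp
    then have "real (Suc (cell m s)) = real m" using m by simp
    then show ?thesis using mp s by simp
  qed
qed

lemma F_cont:
  assumes c: "continuous_on {0..1} x0"
  shows "continuous_on {0..1} (Fconv x0)"
proof -
  let ?H = "\<lambda>s. s * integral {0..1} (\<lambda>u. x0 (s - s*u) * x0 (s*u))"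
  have eq: "Fconv x0 s = ?H s" if s: "0 \<le> s" "s \<le> 1" for s
  proof (cases "s = 0")
    case True then show ?thesis by (simp add: Fconv_def)
  next
    case False
    with s have sp: "s > 0" by simp
    have img: "(\<lambda>x. x / s) ` {0..s} = {0..1}"
    proof
      show "(\<lambda>x. x / s) ` {0..s} \<subseteq> {0..1}" using sp by (auto simp: divide_le_eq)
      show "{0..1} \<subseteq> (\<lambda>x. x / s) ` {0..s}"
      proof
        fix u :: real assume "u \<in> {0..1}"
        then have "s*u \<in> {0..s}" "u = (s*u)/s" using sp by (auto simp: mult_le_cancel_left1)
        then show "u \<in> (\<lambda>x. x / s) ` {0..s}" by blast
      qed
    qed
    have "integral ((\<lambda>x. x / s) ` {0..s}) (\<lambda>u. (\<lambda>t. x0 (s - t) * x0 t) (s * u))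
          = (1 / \<bar>s\<bar>) *\<^sub>R integral {0..s} (\<lambda>t. x0 (s - t) * x0 t)"
      using sp by (intro integral_stretch_real) simp
    then have "integral {0..1} (\<lambda>u. x0 (s - s*u) * x0 (s*u)) = Fconv x0 s / s"
      using sp unfolding img Fconv_def by simp
    then show ?thesis using sp by simp
  qed
  have "continuous_on ({0..1} \<times> cbox 0 1) (\<lambda>(s, u). x0 (s - s*u) * x0 (s*u))"
  proof -
    have 1: "continuous_on ({0..1} \<times> cbox 0 1) (\<lambda>p::real\<times>real. fst p - fst p * snd p)"
      by (intro continuous_intros)
    have 2: "continuous_on ({0..1} \<times> cbox 0 1) (\<lambda>p::real\<times>real. fst p * snd p)"
      by (intro continuous_intros)
    have i1: "(\<lambda>p::real\<times>real. fst p - fst p * snd p) ` ({0..1} \<times> cbox 0 1) \<subseteq> {0..1}"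
      by (auto simp: mult_le_cancel_left1 mult_left_le) (smt (verit) mult_nonneg_nonneg)
    have i2: "(\<lambda>p::real\<times>real. fst p * snd p) ` ({0..1} \<times> cbox 0 1) \<subseteq> {0..1}"
      by (auto intro: mult_le_one)
    have "continuous_on ({0..1} \<times> cbox 0 1) (\<lambda>p::real\<times>real. x0 (fst p - fst p * snd p) * x0 (fst p * snd p))"
      by (intro continuous_intros continuous_on_compose2[OF c 1 i1] continuous_on_compose2[OF c 2 i2])
    then show ?thesis by (simp add: case_prod_beta)
  qed
  then have "continuous_on {0..1} (\<lambda>s. integral (cbox 0 1) (\<lambda>u. x0 (s - s*u) * x0 (s*u)))"
    by (rule integral_continuous_on_param)
  then have "continuous_on {0..1} ?H" by (intro continuous_intros) (simp add: cbox_interval)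
  then show ?thesis by (rule continuous_on_eq) (simp add: eq)
qed
lemma F_bound:
  assumes c: "continuous_on {0..1} x0"
    and bx: "\<forall>t\<in>{0..1}. \<bar>x0 t\<bar> \<le> M"
    and mv: "\<forall>u\<in>{0..1}. \<bar>x0 u - x0 0\<bar> \<le> M * u"
    and s: "0 \<le> s" "s \<le> 1"
  shows "\<bar>Fconv x0 s - s * (x0 0)\<^sup>2\<bar> \<le> M\<^sup>2 * s\<^sup>2"
proof -
  let ?g = "\<lambda>t. x0 (s - t) * x0 t"
  have M0: "0 \<le> M" using bx by force
  have cg: "continuous_on {0..s} ?g"
  proof -
    have 1: "continuous_on {0..s} (\<lambda>t. s - t)" by (intro continuous_intros)
    have i1: "(\<lambda>t. s - t) ` {0..s} \<subseteq> {0..1}" using s by auto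
    have i2: "{0..s} \<subseteq> {0..1}" using s by auto
    show ?thesis
      by (intro continuous_intros continuous_on_compose2[OF c 1 i1] continuous_on_subset[OF c i2])
  qed
  then have ig: "?g integrable_on {0..s}" by (rule integrable_continuous_interval)
  have "((\<lambda>t. ?g t - (x0 0)\<^sup>2) has_integral (Fconv x0 s - s * (x0 0)\<^sup>2)) (cbox 0 s)"
  proof -
    have "(?g has_integral Fconv x0 s) {0..s}" using ig unfolding Fconv_def by blast
    moreover have "((\<lambda>t. (x0 0)\<^sup>2) has_integral s * (x0 0)\<^sup>2) {0..s}"
      using has_integral_const_real[of "(x0 0)\<^sup>2" 0 s] s by (simp add: mult.commute)
    ultimately show ?thesis by (simp add: has_integral_diff cbox_interval)
  qed
  moreover have "norm (?g t - (x0 0)\<^sup>2) \<le> M\<^sup>2 * s" if t: "t \<in> cbox 0 s" for t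
  proof -
    have t01: "t \<in> {0..1}" "s - t \<in> {0..1}" using t s by (auto simp: cbox_interval)
    have e: "?g t - (x0 0)\<^sup>2 = (x0 (s - t) - x0 0) * x0 t + x0 0 * (x0 t - x0 0)"
      by (simp add: algebra_simps power2_eq_square)
    have a1: "\<bar>(x0 (s - t) - x0 0) * x0 t\<bar> \<le> (M * (s - t)) * M"
      unfolding abs_mult by (intro mult_mono) (use mv bx t01 M0 t in \<open>auto simp: cbox_interval\<close>)
    have a2: "\<bar>x0 0 * (x0 t - x0 0)\<bar> \<le> M * (M * t)"
      unfolding abs_mult by (intro mult_mono) (use mv bx t01 M0 t in \<open>auto simp: cbox_interval\<close>)
    have "\<bar>?g t - (x0 0)\<^sup>2\<bar> \<le> (M * (s - t)) * M + M * (M * t)"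
      unfolding e using a1 a2 abs_triangle_ineq order_trans add_mono by fastforce
    also have "\<dots> = M\<^sup>2 * s" by (simp add: algebra_simps power2_eq_square)
    finally show ?thesis by simp
  qed
  ultimately have "norm (Fconv x0 s - s * (x0 0)\<^sup>2) \<le> M\<^sup>2 * s * measure lborel (cbox 0 s)"
    using M0 s by (intro has_integral_bound) auto
  then show ?thesis using s by (simp add: power2_eq_square mult.assoc)
qed

theorem proposition2p11:
  fixes x0 x0' \<xi> :: "real \<Rightarrow> real" and \<delta> \<sigma> :: real and m :: nat
  assumes W: "W2inf x0 x0'"
    and pos: "\<forall>t\<in>{0..1}. x0 t \<ge> 0"
    and x00: "x0 0 > 0"
    and \<delta>: "0 < \<delta>" "\<delta> \<le> 1"
    and \<xi>meas: "\<xi> \<in> borel_measurable lborel"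
    and \<xi>bd: "AE t in lborel. t \<in> {0..1} \<longrightarrow> \<bar>\<xi> t\<bar> \<le> \<delta>"
    and \<sigma>: "\<sigma> > 0"
    and m: "real m \<ge> 1 / \<delta>"
  defines "y \<equiv> (\<lambda>s. Fconv x0 s + \<delta> * \<xi> s)"
  shows "(Qm m y (sqrt \<delta>) \<ge> 0 \<longrightarrow>
           \<bar>sqrt (Qm m y (sqrt \<delta>) / sqrt \<delta>) - x0 0\<bar>
             \<le> (1 + 4 * (C1norm x0 x0')\<^sup>2) / x0 0 * sqrt \<delta>) \<and>
         (Qm m y (sqrt \<delta>) < 0 \<longrightarrow>
           \<bar>x0 0\<bar> \<le> (1 + 4 * (C1norm x0 x0')\<^sup>2) / x0 0 * sqrt \<delta>)"
proof -
  define M where "M = C1norm x0 x0'"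
  define c where "c = x0 0"
  define K where "K = 1 + 4 * M\<^sup>2"
  have der: "\<And>t. t \<in> {0..1} \<Longrightarrow> (x0 has_real_derivative x0' t) (at t within {0..1})"
    using W unfolding W2inf_def by blast
  obtain L where L: "\<forall>s\<in>{0..1}. \<forall>t\<in>{0..1}. \<bar>x0' s - x0' t\<bar> \<le> L * \<bar>s - t\<bar>"
    using W unfolding W2inf_def by blast
  have cx: "continuous_on {0..1} x0" by (rule DERIV_continuous_on[OF der])
  have "(max L 0)-lipschitz_on {0..1} x0'"
    unfolding lipschitz_on_def dist_real_def
  proof (intro conjI ballI)
    fix s t :: real assume "s \<in> {0..1}" "t \<in> {0..1}"
    then have "\<bar>x0' s - x0' t\<bar> \<le> L * \<bar>s - t\<bar>" using L by blast
    also have "\<dots> \<le> max L 0 * \<bar>s - t\<bar>" by (intro mult_right_mono) auto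
    finally show "\<bar>x0' s - x0' t\<bar> \<le> max L 0 * \<bar>s - t\<bar>" .
  qed auto
  then have cx': "continuous_on {0..1} x0'" by (rule lipschitz_on_continuous_on)
  have bdd: "bdd_above ((\<lambda>t. \<bar>f t\<bar>) ` {0..1})" if "continuous_on {0..1} f" for f :: "real \<Rightarrow> real"
  proof -
    have "continuous_on {0..1} (\<lambda>t. \<bar>f t\<bar>)" using that by (intro continuous_intros)
    then have "compact ((\<lambda>t. \<bar>f t\<bar>) ` {0..1})" by (intro compact_continuous_image) auto
    then show ?thesis by (intro bounded_imp_bdd_above compact_imp_bounded)
  qed
  have bx: "\<forall>t\<in>{0..1}. \<bar>x0 t\<bar> \<le> M"
  proof
    fix t :: real assume "t \<in> {0..1}"
    then have "\<bar>x0 t\<bar> \<le> (SUP t\<in>{0..1}. \<bar>x0 t\<bar>)" by (intro cSUP_upper bdd[OF cx])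
    then show "\<bar>x0 t\<bar> \<le> M" unfolding M_def C1norm_def by linarith
  qed
  have bx': "\<forall>t\<in>{0..1}. \<bar>x0' t\<bar> \<le> M"
  proof
    fix t :: real assume "t \<in> {0..1}"
    then have "\<bar>x0' t\<bar> \<le> (SUP t\<in>{0..1}. \<bar>x0' t\<bar>)" by (intro cSUP_upper bdd[OF cx'])
    then show "\<bar>x0' t\<bar> \<le> M" unfolding M_def C1norm_def by linarith
  qed
  have mv: "\<forall>u\<in>{0..1}. \<bar>x0 u - x0 0\<bar> \<le> M * u"
  proof
    fix u :: real assume u: "u \<in> {0..1}"
    have "norm (x0 u - x0 0) \<le> M * norm (u - 0)"
      by (rule field_differentiable_bound[of "{0..1}" x0 x0' M]) (use der bx' u in auto)
    then show "\<bar>x0 u - x0 0\<bar> \<le> M * u" using u by simp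
  qed
  have cM: "c \<le> M" using bx x00 unfolding c_def by force
  have c0: "c > 0" using x00 c_def by simp
  have m1: "m \<ge> 1"
  proof -
    have "1 \<le> 1 / \<delta>" using \<delta> by simp
    then show ?thesis using m by linarith
  qed
  have mp: "real m > 0" using m1 by simp
  define r where "r = sqrt \<delta>"
  have r0: "0 < r" "r \<le> 1" and rr: "r\<^sup>2 = \<delta>" using \<delta> by (auto simp: r_def)
  define a where "a = real (cell m r) / real m"
  define b where "b = real (Suc (cell m r)) / real m"
  have ab: "a \<le> r" "r \<le> b" "b \<le> 1" "0 \<le> a"
    using cell_props[OF m1, of r] r0 mp by (auto simp: a_def b_def)
  have bma: "b - a = 1 / real m" by (simp add: a_def b_def diff_divide_distrib[symmetric])
  have hd: "1 / real m \<le> \<delta>"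
  proof -
    have "1 \<le> real m * \<delta>" using m \<delta> by (simp add: pos_divide_le_eq)
    then have "1 \<le> \<delta> * real m" by (simp only: mult.commute)
    then show ?thesis using mp by (simp add: pos_divide_le_eq)
  qed
  from eventually_ae_filter_negligible[THEN iffD1, OF AE_completion[OF \<xi>bd]]
  obtain N where N: "negligible N" "{t. \<not> (t \<in> {0..1} \<longrightarrow> \<bar>\<xi> t\<bar> \<le> \<delta>)} \<subseteq> N"
    by blast
  define \<xi>' where "\<xi>' = (\<lambda>t. max (-\<delta>) (min \<delta> (\<xi> t)))"
  define y' where "y' = (\<lambda>s. Fconv x0 s + \<delta> * \<xi>' s)"
  have \<xi>'bd: "\<bar>\<xi>' t\<bar> \<le> \<delta>" for t using \<delta> by (auto simp: \<xi>'_def)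
  have "\<xi>' absolutely_integrable_on {a..b}"
  proof (rule measurable_bounded_by_integrable_imp_absolutely_integrable)
    have "\<xi> \<in> borel_measurable (lebesgue_on {a..b})"
      by (intro measurable_restrict_space1 measurable_completion \<xi>meas)
    then show "\<xi>' \<in> borel_measurable (lebesgue_on {a..b})" unfolding \<xi>'_def by measurable
    show "(\<lambda>_. \<delta>) integrable_on {a..b}" by (intro integrable_continuous_interval continuous_on_const)
    show "norm (\<xi>' t) \<le> \<delta>" for t using \<xi>'bd by simp
  qed auto
  then have i\<xi>: "\<xi>' integrable_on {a..b}" using set_lebesgue_integral_eq_integral(1) by blast
  have sub: "{a..b} \<subseteq> {0..1}" using ab by auto
  have iF: "Fconv x0 integrable_on {a..b}"
    by (intro integrable_continuous_interval continuous_on_subset[OF F_cont[OF cx] sub])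
  have iy': "y' integrable_on {a..b}" unfolding y'_def using iF integrable_cmul[OF i\<xi>, of \<delta>] by (intro integrable_add) auto
  have Qeq: "Qm m y r = real m * integral {a..b} y'"
  proof -
    have "integral {a..b} y = integral {a..b} y'"
    proof (rule integral_spike[OF N(1)])
      fix t assume t: "t \<in> {a..b} - N"
      then have "t \<in> {0..1}" "t \<notin> N" using sub by auto
      then have "\<bar>\<xi> t\<bar> \<le> \<delta>" using N(2) by blast
      then show "y' t = y t" by (auto simp: y'_def y_def \<xi>'_def)
    qed
    then show ?thesis unfolding Qm_def a_def[symmetric] b_def[symmetric] by simp
  qed
  have pw: "norm (y' s - r * c\<^sup>2) \<le> \<delta> * K" if s: "s \<in> cbox a b" for s
  proof -
    have s01: "0 \<le> s" "s \<le> 1" and sr: "\<bar>s - r\<bar> \<le> \<delta>" using s ab bma hd by (auto simp: cbox_interval)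
    have F: "\<bar>Fconv x0 s - s * c\<^sup>2\<bar> \<le> M\<^sup>2 * s\<^sup>2"
      using F_bound[OF cx bx mv s01] c_def by simp
    have cc: "c\<^sup>2 \<le> M\<^sup>2" using cM c0 by (intro power_mono) auto
    have l: "\<bar>s * c\<^sup>2 - r * c\<^sup>2\<bar> \<le> M\<^sup>2 * \<delta>"
    proof -
      have "\<bar>s * c\<^sup>2 - r * c\<^sup>2\<bar> = c\<^sup>2 * \<bar>s - r\<bar>" by (simp add: left_diff_distrib[symmetric] abs_mult)
      also have "\<dots> \<le> M\<^sup>2 * \<delta>" using cc sr by (intro mult_mono) auto
      finally show ?thesis .
    qed
    have s2: "s\<^sup>2 \<le> 3 * \<delta>"
    proof (cases "r\<^sup>2 \<ge> 1/3")
      case True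
      have "s\<^sup>2 \<le> 1" using s01 by (simp add: power_le_one)
      then show ?thesis using True rr by simp
    next
      case False
      have "r < 0.6"
      proof (rule ccontr)
        assume "\<not> r < 0.6"
        then have "0.6\<^sup>2 \<le> r\<^sup>2" by (intro power_mono) auto
        then show False using False by (simp add: power2_eq_square)
      qed
      have "s \<le> r + r\<^sup>2" using sr rr by simp
      then have "s\<^sup>2 \<le> (r + r\<^sup>2)\<^sup>2" using s01 by (intro power_mono) auto
      also have "\<dots> = r\<^sup>2 * (1 + r)\<^sup>2" by (simp add: power2_eq_square algebra_simps)
      also have "\<dots> \<le> r\<^sup>2 * 3"
      proof -
        have "(1 + r)\<^sup>2 \<le> 1.6\<^sup>2" using \<open>r < 0.6\<close> r0 by (intro power_mono) auto
        then show ?thesis by (intro mult_left_mono) (auto simp: power2_eq_square)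
      qed
      finally show ?thesis using rr by simp
    qed
    have n: "\<bar>\<delta> * \<xi>' s\<bar> \<le> \<delta>"
    proof -
      have "\<bar>\<delta> * \<xi>' s\<bar> \<le> \<delta> * \<delta>" using \<xi>'bd \<delta> by (simp add: abs_mult mult_left_mono)
      also have "\<dots> \<le> \<delta>" using \<delta> by (simp add: mult_left_le)
      finally show ?thesis .
    qed
    have M2: "M\<^sup>2 * s\<^sup>2 \<le> M\<^sup>2 * (3 * \<delta>)" using s2 by (intro mult_left_mono) auto
    have "\<bar>y' s - r * c\<^sup>2\<bar> \<le> M\<^sup>2 * s\<^sup>2 + M\<^sup>2 * \<delta> + \<delta>"
      using F l n unfolding y'_def by linarith
    also have "\<dots> \<le> \<delta> * K" using M2 unfolding K_def by (simp add: algebra_simps)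
    finally show ?thesis by simp
  qed
  have K0: "0 \<le> \<delta> * K" using \<delta> by (simp add: K_def)
  have hi: "((\<lambda>s. y' s - r * c\<^sup>2) has_integral (integral {a..b} y' - (b - a) * (r * c\<^sup>2))) (cbox a b)"
  proof -
    have "((\<lambda>s. r * c\<^sup>2) has_integral (b - a) * (r * c\<^sup>2)) {a..b}"
      using has_integral_const_real[of "r * c\<^sup>2" a b] ab by simp
    then show ?thesis using has_integral_diff[OF integrable_integral[OF iy']] by (simp add: cbox_interval)
  qed
  have "norm (integral {a..b} y' - (b - a) * (r * c\<^sup>2)) \<le> \<delta> * K * measure lborel (cbox a b)"
    by (rule has_integral_bound[OF K0 hi pw])
  then have "\<bar>integral {a..b} y' - (b - a) * (r * c\<^sup>2)\<bar> \<le> \<delta> * K * (b - a)" using ab by simp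
  then have "real m * \<bar>integral {a..b} y' - (b - a) * (r * c\<^sup>2)\<bar> \<le> real m * (\<delta> * K * (b - a))"
    using mp by (intro mult_left_mono) auto
  then have E: "\<bar>Qm m y r - r * c\<^sup>2\<bar> \<le> \<delta> * K"
    unfolding Qeq bma using mp by (simp add: abs_mult right_diff_distrib[symmetric] field_simps)
  have goal1: "\<bar>sqrt (Qm m y r / r) - c\<bar> \<le> K / c * r" if Q0: "Qm m y r \<ge> 0"
  proof -
    define q where "q = Qm m y r / r"
    have q0: "q \<ge> 0" using Q0 r0 by (simp add: q_def)
    have qe: "\<bar>q - c\<^sup>2\<bar> \<le> r * K"
    proof -
      have "q - c\<^sup>2 = (Qm m y r - r * c\<^sup>2) / r" using r0 by (simp add: q_def field_simps)
      then have "\<bar>q - c\<^sup>2\<bar> = \<bar>Qm m y r - r * c\<^sup>2\<bar> / r" using r0 by simp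
      also have "\<dots> \<le> \<delta> * K / r" using E r0 by (intro divide_right_mono) auto
      also have "\<dots> = r * K" using rr r0 by (simp add: power2_eq_square field_simps)
      finally show ?thesis .
    qed
    have "(sqrt q - c) * (sqrt q + c) = q - c\<^sup>2" using q0 by (simp add: algebra_simps power2_eq_square)
    then have "\<bar>sqrt q - c\<bar> * (sqrt q + c) = \<bar>q - c\<^sup>2\<bar>"
      using c0 q0 by (metis abs_mult abs_of_nonneg add_nonneg_nonneg less_imp_le real_sqrt_ge_zero)
    moreover have "\<bar>sqrt q - c\<bar> * c \<le> \<bar>sqrt q - c\<bar> * (sqrt q + c)" using q0 by (intro mult_left_mono) auto
    ultimately have "\<bar>sqrt q - c\<bar> * c \<le> r * K" using qe by linarith
    then show ?thesis using c0 unfolding q_def by (simp add: field_simps)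
  qed
  have goal2: "\<bar>c\<bar> \<le> K / c * r" if Q0: "Qm m y r < 0"
  proof -
    have "r * c\<^sup>2 \<le> \<delta> * K" using E Q0 by linarith
    then have "r * c\<^sup>2 \<le> r * (r * K)" using rr by (simp add: power2_eq_square mult.assoc[symmetric])
    then have "c\<^sup>2 \<le> r * K" using r0 by simp
    then show ?thesis using c0 by (simp add: field_simps power2_eq_square)
  qed
  show ?thesis using goal1 goal2 unfolding r_def c_def K_def M_def by simp
qed

end
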